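(* There exist absolute constants $C>0$ and $t_0$ such that for all sufficiently large $n$, every integer $t\ge t_0$ and every integer $s$ with $2t\le s\le n/2$, there exists a graph $G$ on $n$ vertices with independence number $$\alpha(G)\le C\, t\Big(\frac{n}{s}\Big)^{2t/(s-t)}\log (n/t)$$ such that every induced subgraph of $G$ on $s$ vertices contains an independent set of size $t$.
   Context: All logarithms are natural. $\alpha(G)$ denotes the maximum size of an independent set in $G$. The $O(\cdot)$ bound of the paper is expressed via an absolute constant. *)

theory Defs
  imports Complex_Main
begin

text \<open>A (simple) graph on the vertex set {0..<n} is given by an edge relation
  E that is symmetric and irreflexive (only its restriction to {0..<n} matters).\<close>

definition simple_graph :: "nat \<Rightarrow> (nat \<Rightarrow> nat \<Rightarrow> bool) \<Rightarrow> bool" where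
  "simple_graph n E \<longleftrightarrow>
     (\<forall>u\<in>{0..<n}. \<forall>v\<in>{0..<n}. E u v \<longleftrightarrow> E v u) \<and> (\<forall>v\<in>{0..<n}. \<not> E v v)"

definition independent_set :: "nat \<Rightarrow> (nat \<Rightarrow> nat \<Rightarrow> bool) \<Rightarrow> nat set \<Rightarrow> bool" where
  "independent_set n E S \<longleftrightarrow> S \<subseteq> {0..<n} \<and> (\<forall>u\<in>S. \<forall>v\<in>S. \<not> E u v)"

definition alpha :: "nat \<Rightarrow> (nat \<Rightarrow> nat \<Rightarrow> bool) \<Rightarrow> nat" where
  "alpha n E = Max {card S | S. independent_set n E S}"

end

theory Submission
  imports Defs "HOL-Library.FuncSet"
begin

lemma arith_turan:
  fixes r m x i :: real
  assumes "0 \<le> m" "m \<le> r" "m * r \<le> x" "(r - m)^2 \<le> i * (x - m^2)" "0 \<le> i"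
  shows "r^2 \<le> (i + 1) * x"
proof (cases "x - m^2 > 0")
  case True
  have "r^2 * (x - m^2) \<le> x * (x - m^2) + x * (r - m)^2"
  proof -
    have "0 \<le> (x - r*m)^2" by simp
    thus ?thesis by (simp add: power2_eq_square algebra_simps)
  qed
  also have "\<dots> \<le> x * (x - m^2) + x * (i * (x - m^2))"
    using assms(4) assms True by (intro add_left_mono mult_left_mono) (auto intro: order_trans[OF _ assms(3)] mult_nonneg_nonneg)
  also have "\<dots> = ((i+1) * x) * (x - m^2)" by (simp add: algebra_simps)
  finally show ?thesis using True by simp
next
  case False
  have "m * m \<le> m * r" using assms by (intro mult_left_mono) auto
  moreover have "m*m = m^2" by (simp add: power2_eq_square)
  ultimately have x: "x = m^2" and mr: "m * r = m*m" using False assms(3) by linarith+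
  have "r^2 \<le> x"
  proof (cases "m = 0")
    case True thus ?thesis using assms(4) x by simp
  next
    case False
    hence "r = m" using mr by simp
    thus ?thesis using x by simp
  qed
  moreover have "0 \<le> x" using \<open>x = m^2\<close> by simp
  ultimately show ?thesis using assms(5) by (simp add: distrib_right add_increasing)
qed

definition ecount :: "(nat \<Rightarrow> nat \<Rightarrow> bool) \<Rightarrow> nat set \<Rightarrow> nat" where
  "ecount E R = card {(u,v). u \<in> R \<and> v \<in> R \<and> E u v}"

lemma ecount_sum:
  assumes "finite R"
  shows "ecount E R = (\<Sum>w\<in>R. card {y\<in>R. E w y})"
proof -
  have "{(u,v). u \<in> R \<and> v \<in> R \<and> E u v} = Sigma R (\<lambda>w. {y\<in>R. E w y})" by auto
  thus ?thesis unfolding ecount_def using assms by (simp add: card_SigmaI)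
qed

lemma turan:
  fixes E :: "nat \<Rightarrow> nat \<Rightarrow> bool"
  assumes sym: "\<And>u v. E u v = E v u" and irr: "\<And>v. \<not> E v v" and fin: "finite R"
  shows "\<exists>I\<subseteq>R. (\<forall>u\<in>I. \<forall>v\<in>I. \<not> E u v) \<and> (card R)^2 \<le> card I * (ecount E R + card R)"
  using fin
proof (induction "card R" arbitrary: R rule: less_induct)
  case less
  show ?case
  proof (cases "R = {}")
    case True thus ?thesis by simp
  next
    case False
    define dg where "dg w = card {y\<in>R. E w y}" for w
    have "Min (dg ` R) \<in> dg ` R" using False less.prems by simp
    then obtain v where vR: "v \<in> R" and vm: "dg v = Min (dg ` R)" by auto
    have vmin: "\<And>w. w \<in> R \<Longrightarrow> dg v \<le> dg w" unfolding vm
      using less.prems by (intro Min_le) auto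
    define d where "d = dg v"
    define N where "N = {y\<in>R. E v y}"
    define X where "X = insert v N"
    define R' where "R' = R - X"
    have finN: "finite N" using less.prems N_def by simp
    have vN: "v \<notin> N" using irr N_def by simp
    have cN: "card N = d" unfolding N_def d_def dg_def by simp
    have cX: "card X = d + 1" using X_def vN finN cN by simp
    have XR: "X \<subseteq> R" using X_def N_def vR by auto
    have cR': "card R' = card R - (d+1)" unfolding R'_def using XR cX less.prems
      by (simp add: card_Diff_subset finite_subset)
    have dr: "d + 1 \<le> card R" using XR cX less.prems card_mono by metis
    have lt: "card R' < card R" using cR' dr by simp
    obtain I' where I'R': "I' \<subseteq> R'" and I'ind: "\<forall>u\<in>I'. \<forall>w\<in>I'. \<not> E u w"
      and I'b: "(card R')^2 \<le> card I' * (ecount E R' + card R')"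
      using less.hyps[OF lt] less.prems R'_def by auto
    have e1: "d * card R \<le> ecount E R"
    proof -
      have "d * card R = (\<Sum>w\<in>R. d)" by simp
      also have "\<dots> \<le> (\<Sum>w\<in>R. dg w)" using vmin d_def by (intro sum_mono) auto
      also have "\<dots> = ecount E R" using ecount_sum[OF less.prems] dg_def by simp
      finally show ?thesis .
    qed
    have e2: "ecount E R' + (d+1) * d \<le> ecount E R"
    proof -
      define Y where "Y = Sigma X (\<lambda>w. {y\<in>R. E w y})"
      have finR: "finite R" by (rule less.prems)
      have "card Y = (\<Sum>w\<in>X. dg w)" unfolding Y_def dg_def
        using XR finR by (subst card_SigmaI) (auto intro: finite_subset)
      also have "\<dots> \<ge> (\<Sum>w\<in>X. d)" using vmin XR d_def by (intro sum_mono) auto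
      finally have cY: "card Y \<ge> (d+1) * d" using cX by simp
      have sub: "{(u,w). u \<in> R' \<and> w \<in> R' \<and> E u w} \<union> Y \<subseteq> {(u,w). u \<in> R \<and> w \<in> R \<and> E u w}"
        unfolding Y_def R'_def using XR by auto
      have disj: "{(u,w). u \<in> R' \<and> w \<in> R' \<and> E u w} \<inter> Y = {}"
        unfolding Y_def R'_def by auto
      have fin2: "finite {(u,w). u \<in> R \<and> w \<in> R \<and> E u w}"
        by (rule finite_subset[of _ "R \<times> R"]) (use finR in auto)
      have "card ({(u,w). u \<in> R' \<and> w \<in> R' \<and> E u w} \<union> Y) \<le> ecount E R"
        unfolding ecount_def by (rule card_mono[OF fin2 sub])
      moreover have "card ({(u,w). u \<in> R' \<and> w \<in> R' \<and> E u w} \<union> Y)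
          = ecount E R' + card Y"
        unfolding ecount_def
        by (rule card_Un_disjoint) (use fin2 sub disj in \<open>auto intro: finite_subset\<close>)
      ultimately show ?thesis using cY by simp
    qed
    define I where "I = insert v I'"
    have vI': "v \<notin> I'" using I'R' R'_def X_def by auto
    have cI: "card I = card I' + 1" unfolding I_def using vI' I'R' less.prems
      by (simp add: finite_subset R'_def)
    have IR: "I \<subseteq> R" using I_def I'R' R'_def vR by auto
    have Iind: "\<forall>u\<in>I. \<forall>w\<in>I. \<not> E u w"
    proof -
      have "\<And>u. u \<in> I' \<Longrightarrow> \<not> E v u" using I'R' unfolding R'_def X_def N_def by auto
      thus ?thesis unfolding I_def using I'ind irr sym by blast
    qed
    have "real ((card R)^2) \<le> real (card I) * real (ecount E R + card R)"
    proof -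
      have "(real (card R))^2 \<le> (real (card I') + 1) * real (ecount E R + card R)"
      proof (rule arith_turan[where m = "real (d+1)"])
        show "0 \<le> real (d+1)" by simp
        show "real (d+1) \<le> real (card R)" using dr by simp
        show "real (d+1) * real (card R) \<le> real (ecount E R + card R)"
        proof -
          have "(d+1) * card R \<le> ecount E R + card R" using e1 by simp
          thus ?thesis by (simp only: of_nat_mult[symmetric] of_nat_le_iff)
        qed
        show "0 \<le> real (card I')" by simp
        have "(real (card R) - real (d+1))^2 = real ((card R')^2)" using cR' dr
          by (simp add: of_nat_diff)
        also have "\<dots> \<le> real (card I') * real (ecount E R' + card R')"
          using I'b of_nat_le_iff by (metis of_nat_mult)
        also have "\<dots> \<le> real (card I') * (real (ecount E R + card R) - (real (d+1))^2)"
        proof (intro mult_left_mono)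
          have c1: "card R' + (d+1) = card R" using cR' dr by simp
          have c2: "(d+1)^2 = (d+1) * d + (d+1)" by (simp add: power2_eq_square)
          have "ecount E R' + card R' + (d+1)^2 \<le> ecount E R + card R"
            using e2 c1 c2 by linarith
          hence "real (ecount E R' + card R' + (d+1)^2) \<le> real (ecount E R + card R)"
            by (simp only: of_nat_le_iff)
          hence "real (ecount E R' + card R') + (real (d+1))^2 \<le> real (ecount E R + card R)"
            by (simp only: of_nat_add of_nat_power)
          thus "real (ecount E R' + card R') \<le> real (ecount E R + card R) - (real (d+1))^2"
            by linarith
        qed simp
        finally show "(real (card R) - real (d+1))^2 \<le> real (card I') * (real (ecount E R + card R) - (real (d+1))^2)" .
      qed
      thus ?thesis using cI by (simp add: add.commute)
    qed
    hence "(card R)^2 \<le> card I * (ecount E R + card R)" by (metis of_nat_le_iff of_nat_mult)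
    thus ?thesis using IR Iind by blast
  qed
qed

definition Pn :: "nat \<Rightarrow> (nat \<times> nat) set" where "Pn n = {(u,v). u < v \<and> v < n}"
definition pr :: "nat set \<Rightarrow> (nat \<times> nat) set" where "pr T = {(u,v). u \<in> T \<and> v \<in> T \<and> u < v}"

lemma finite_Pn: "finite (Pn n)"
  by (rule finite_subset[of _ "{0..<n} \<times> {0..<n}"]) (auto simp: Pn_def)

lemma pr_sub: "T \<subseteq> {0..<n} \<Longrightarrow> pr T \<subseteq> Pn n"
  by (auto simp: pr_def Pn_def)

lemma card_pr: assumes "finite T" shows "card (pr T) = card T choose 2"
proof -
  have "bij_betw (\<lambda>(u,v). {u,v}) (pr T) {B. B \<subseteq> T \<and> card B = 2}"
  proof (rule bij_betw_imageI)
    show "inj_on (\<lambda>(u,v). {u,v}) (pr T)"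
      by (auto simp: inj_on_def pr_def doubleton_eq_iff)
    show "(\<lambda>(u,v). {u,v}) ` pr T = {B. B \<subseteq> T \<and> card B = 2}"
    proof
      show "(\<lambda>(u,v). {u,v}) ` pr T \<subseteq> {B. B \<subseteq> T \<and> card B = 2}"
        by (auto simp: pr_def)
      show "{B. B \<subseteq> T \<and> card B = 2} \<subseteq> (\<lambda>(u,v). {u,v}) ` pr T"
      proof
        fix B assume "B \<in> {B. B \<subseteq> T \<and> card B = 2}"
        then obtain u v where B: "B = {u,v}" "u \<noteq> v" "B \<subseteq> T" by (auto simp: card_2_iff)
        show "B \<in> (\<lambda>(u,v). {u,v}) ` pr T"
        proof (cases "u < v")
          case True thus ?thesis using B by (auto simp: pr_def image_iff intro!: bexI[of _ "(u,v)"])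
        next
          case False hence "v < u" using B by simp
          thus ?thesis using B by (auto simp: pr_def image_iff intro!: bexI[of _ "(v,u)"])
        qed
      qed
    qed
  qed
  hence "card (pr T) = card {B. B \<subseteq> T \<and> card B = 2}" by (rule bij_betw_same_card)
  thus ?thesis using n_subsets[OF assms] by simp
qed

lemma card_nonzero:
  assumes "A \<subseteq> Pn n"
  shows "card {f \<in> Pi\<^sub>E (Pn n) (\<lambda>_. {0..<q::nat}). \<forall>x\<in>A. f x \<noteq> 0}
       = (q - 1) ^ card A * q ^ (card (Pn n) - card A)"
proof -
  have "{f \<in> Pi\<^sub>E (Pn n) (\<lambda>_. {0..<q::nat}). \<forall>x\<in>A. f x \<noteq> 0}
       = Pi\<^sub>E (Pn n) (\<lambda>x. if x \<in> A then {1..<q} else {0..<q})"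
    using assms by (auto simp: PiE_def Pi_def split: if_splits) (metis Suc_le_eq subsetD)
  hence "card {f \<in> Pi\<^sub>E (Pn n) (\<lambda>_. {0..<q::nat}). \<forall>x\<in>A. f x \<noteq> 0}
      = (\<Prod>x\<in>Pn n. if x \<in> A then q - 1 else q)"
    by (simp add: card_PiE finite_Pn if_distrib cong: if_cong)
  also have "\<dots> = (\<Prod>x\<in>A. q - 1) * (\<Prod>x\<in>Pn n - A. q)"
    using assms finite_Pn by (subst prod.If_cases) (auto simp: Int_absorb1 Diff_eq)
  also have "\<dots> = (q - 1) ^ card A * q ^ (card (Pn n) - card A)"
    using assms finite_Pn by (simp add: card_Diff_subset finite_subset)
  finally show ?thesis .
qed

lemma card_zero:
  assumes "A \<subseteq> Pn n"
  shows "card {f \<in> Pi\<^sub>E (Pn n) (\<lambda>_. {0..<q::nat}). \<forall>x\<in>A. f x = 0 } \<le> q ^ (card (Pn n) - card A)"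
proof -
  have "{f \<in> Pi\<^sub>E (Pn n) (\<lambda>_. {0..<q::nat}). \<forall>x\<in>A. f x = 0}
       \<subseteq> Pi\<^sub>E (Pn n) (\<lambda>x. if x \<in> A then {0} else {0..<q})"
    using assms by (auto simp: PiE_def Pi_def split: if_splits)
  hence "card {f \<in> Pi\<^sub>E (Pn n) (\<lambda>_. {0..<q::nat}). \<forall>x\<in>A. f x = 0}
      \<le> card (Pi\<^sub>E (Pn n) (\<lambda>x. if x \<in> A then {0} else {0..<q}))"
    by (intro card_mono) (auto intro!: finite_PiE finite_Pn)
  also have "\<dots> = (\<Prod>x\<in>Pn n. if x \<in> A then 1 else q)"
    by (simp add: card_PiE finite_Pn if_distrib cong: if_cong)
  also have "\<dots> = (\<Prod>x\<in>A. 1) * (\<Prod>x\<in>Pn n - A. q)"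
    using assms finite_Pn by (subst prod.If_cases) (auto simp: Int_absorb1 Diff_eq)
  also have "\<dots> = q ^ (card (Pn n) - card A)"
    using assms finite_Pn by (simp add: card_Diff_subset finite_subset)
  finally show ?thesis .
qed

lemma real_pow_split:
  fixes q :: nat assumes "q \<ge> 1" "c \<le> M"
  shows "real ((q - 1) ^ c * q ^ (M - c)) = real q ^ M * (1 - 1 / real q) ^ c"
proof -
  have "real q ^ M = real q ^ c * real q ^ (M - c)" using assms by (simp flip: power_add)
  moreover have "(1 - 1 / real q) ^ c * real q ^ c = (real q - 1) ^ c"
    using assms by (simp add: power_mult_distrib[symmetric] field_simps)
  ultimately show ?thesis using assms by (simp add: of_nat_diff algebra_simps)
qed

lemma real_pow_split2:
  fixes q :: nat assumes "q \<ge> 1" "c \<le> M"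
  shows "real (q ^ (M - c)) = real q ^ M * (1 / real q) ^ c"
proof -
  have "real q ^ M = real q ^ c * real q ^ (M - c)" using assms by (simp flip: power_add)
  thus ?thesis using assms by (simp add: field_simps)
qed

lemma exists_good:
  fixes n q a s k :: nat
  assumes q: "q \<ge> 1"
  and b1: "real (n choose a) * (1 - 1/real q)^(a choose 2) < 1/2"
  and b2: "real (n choose s) * real ((s choose 2) choose k) * (1/real q)^k < 1/2"
  shows "\<exists>f \<in> Pi\<^sub>E (Pn n) (\<lambda>_. {0..<q}).
     (\<forall>T. T \<subseteq> {0..<n} \<and> card T = a \<longrightarrow> (\<exists>x\<in>pr T. f x = 0)) \<and>
     (\<forall>S A. S \<subseteq> {0..<n} \<and> card S = s \<and> A \<subseteq> pr S \<and> card A = k \<longrightarrow> (\<exists>x\<in>A. f x \<noteq> 0))"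
proof -
  define \<Omega> where "\<Omega> = Pi\<^sub>E (Pn n) (\<lambda>_. {0..<q})"
  define M where "M = card (Pn n)"
  have finO: "finite \<Omega>" unfolding \<Omega>_def by (auto intro!: finite_PiE finite_Pn)
  have cO: "card \<Omega> = q ^ M" unfolding \<Omega>_def M_def by (simp add: card_PiE finite_Pn)
  define Ta where "Ta = {T. T \<subseteq> {0..<n} \<and> card T = a}"
  define Ts where "Ts = {T. T \<subseteq> {0..<n} \<and> card T = s}"
  have finTa: "finite Ta" unfolding Ta_def by (rule finite_subset[of _ "Pow {0..<n}"]) auto
  have finTs: "finite Ts" unfolding Ts_def by (rule finite_subset[of _ "Pow {0..<n}"]) auto
  have cTa: "card Ta = n choose a" unfolding Ta_def using n_subsets[of "{0..<n}" a] by simp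
  have cTs: "card Ts = n choose s" unfolding Ts_def using n_subsets[of "{0..<n}" s] by simp
  define B1 where "B1 T = {f \<in> \<Omega>. \<forall>x\<in>pr T. f x \<noteq> 0}" for T
  define As where "As S = {A. A \<subseteq> pr S \<and> card A = k}" for S
  define B2 where "B2 A = {f \<in> \<Omega>. \<forall>x\<in>A. f x = 0}" for A
  define Bad1 where "Bad1 = (\<Union>T\<in>Ta. B1 T)"
  define Bad2 where "Bad2 = (\<Union>S\<in>Ts. \<Union>A\<in>As S. B2 A)"
  have "real (card Bad1) \<le> (\<Sum>T\<in>Ta. real (card (B1 T)))"
    unfolding Bad1_def using card_UN_le[OF finTa, of B1] by (metis of_nat_le_iff of_nat_sum)
  also have "\<dots> = (\<Sum>T\<in>Ta. real q ^ M * (1 - 1 / real q) ^ (a choose 2))"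
  proof (rule sum.cong[OF refl])
    fix T assume T: "T \<in> Ta"
    hence sub: "pr T \<subseteq> Pn n" and fT: "finite T" using pr_sub unfolding Ta_def by (auto intro: finite_subset)
    have cpr: "card (pr T) = a choose 2" using card_pr[OF fT] T Ta_def by simp
    have le: "card (pr T) \<le> M" unfolding M_def by (rule card_mono[OF finite_Pn sub])
    show "real (card (B1 T)) = real q ^ M * (1 - 1 / real q) ^ (a choose 2)"
      unfolding B1_def \<Omega>_def card_nonzero[OF sub] M_def[symmetric]
      using real_pow_split[OF q le] cpr by simp
  qed
  also have "\<dots> = real (n choose a) * (1 - 1/real q)^(a choose 2) * real q ^ M"
    using cTa by simp
  also have "\<dots> < 1/2 * real q ^ M" using b1 q by (intro mult_strict_right_mono) auto
  finally have c1: "real (card Bad1) < 1/2 * real q ^ M" .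
  have "real (card Bad2) \<le> (\<Sum>S\<in>Ts. real (card (\<Union>A\<in>As S. B2 A)))"
    unfolding Bad2_def using card_UN_le[OF finTs, of "\<lambda>S. \<Union>A\<in>As S. B2 A"]
    by (metis of_nat_le_iff of_nat_sum)
  also have "\<dots> \<le> (\<Sum>S\<in>Ts. real ((s choose 2) choose k) * (real q ^ M * (1 / real q) ^ k))"
  proof (rule sum_mono)
    fix S assume S: "S \<in> Ts"
    hence sub: "pr S \<subseteq> Pn n" and fS: "finite S" using pr_sub unfolding Ts_def by (auto intro: finite_subset)
    have finpr: "finite (pr S)" using sub finite_Pn by (rule finite_subset)
    have finAs: "finite (As S)" unfolding As_def
      by (rule finite_subset[of _ "Pow (pr S)"]) (use finpr in auto)
    have cAs: "card (As S) = (s choose 2) choose k"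
      unfolding As_def using n_subsets[OF finpr, of k] card_pr[OF fS] S Ts_def by simp
    have "real (card (\<Union>A\<in>As S. B2 A)) \<le> (\<Sum>A\<in>As S. real (card (B2 A)))"
      using card_UN_le[OF finAs, of B2] by (metis of_nat_le_iff of_nat_sum)
    also have "\<dots> \<le> (\<Sum>A\<in>As S. real q ^ M * (1 / real q) ^ k)"
    proof (rule sum_mono)
      fix A assume A: "A \<in> As S"
      hence subA: "A \<subseteq> Pn n" and cA: "card A = k" using sub unfolding As_def by auto
      have le: "card A \<le> M" unfolding M_def by (rule card_mono[OF finite_Pn subA])
      have "card (B2 A) \<le> q ^ (M - card A)"
        unfolding B2_def \<Omega>_def M_def using card_zero[OF subA] by simp
      hence "real (card (B2 A)) \<le> real q ^ (M - card A)" by (metis of_nat_le_iff of_nat_power)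
      moreover have "real q ^ (M - card A) = real q ^ M * (1 / real q) ^ k"
        using real_pow_split2[OF q le] cA by simp
      ultimately show "real (card (B2 A)) \<le> real q ^ M * (1 / real q) ^ k"
        by linarith
    qed
    also have "\<dots> = real ((s choose 2) choose k) * (real q ^ M * (1 / real q) ^ k)"
      using cAs by simp
    finally show "real (card (\<Union>A\<in>As S. B2 A)) \<le> real ((s choose 2) choose k) * (real q ^ M * (1 / real q) ^ k)" .
  qed
  also have "\<dots> = real (n choose s) * real ((s choose 2) choose k) * (1/real q)^k * real q ^ M"
    using cTs by simp
  also have "\<dots> < 1/2 * real q ^ M" using b2 q by (intro mult_strict_right_mono) auto
  finally have c2: "real (card Bad2) < 1/2 * real q ^ M" .
  have "card (Bad1 \<union> Bad2) < card \<Omega>"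
  proof -
    have "real (card (Bad1 \<union> Bad2)) \<le> real (card Bad1) + real (card Bad2)"
      using card_Un_le[of Bad1 Bad2] by linarith
    also have "\<dots> < real q ^ M" using c1 c2 by linarith
    finally show ?thesis using cO by (metis of_nat_less_iff of_nat_power)
  qed
  moreover have "Bad1 \<union> Bad2 \<subseteq> \<Omega>" by (auto simp: Bad1_def B1_def Bad2_def B2_def)
  ultimately have "\<not> \<Omega> \<subseteq> Bad1 \<union> Bad2" by (metis subset_antisym less_irrefl)
  then obtain f where f: "f \<in> \<Omega>" "f \<notin> Bad1" "f \<notin> Bad2" by auto
  show ?thesis
  proof (intro bexI[of _ f] conjI allI impI)
    show "f \<in> Pi\<^sub>E (Pn n) (\<lambda>_. {0..<q})" using f \<Omega>_def by simp
    fix T assume "T \<subseteq> {0..<n} \<and> card T = a"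
    thus "\<exists>x\<in>pr T. f x = 0" using f unfolding Bad1_def B1_def Ta_def by auto
  next
    fix S A assume "S \<subseteq> {0..<n} \<and> card S = s \<and> A \<subseteq> pr S \<and> card A = k"
    thus "\<exists>x\<in>A. f x \<noteq> 0" using f unfolding Bad2_def B2_def Ts_def As_def by auto
  qed
qed

lemma ecount_eq:
  assumes "\<And>u v. E u v = (u \<noteq> v \<and> f (min u v, max u v) = (0::nat))" and fin: "finite S"
  shows "ecount E S = 2 * card {x \<in> pr S. f x = 0}"
proof -
  define A0 where "A0 = {x \<in> pr S. f x = 0}"
  have finA: "finite A0" unfolding A0_def pr_def
    by (rule finite_subset[of _ "S \<times> S"]) (use fin in auto)
  have eq: "{(u,v). u \<in> S \<and> v \<in> S \<and> E u v} = A0 \<union> (\<lambda>(u,v). (v,u)) ` A0"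
  proof (intro equalityI subsetI)
    fix x assume "x \<in> {(u,v). u \<in> S \<and> v \<in> S \<and> E u v}"
    then obtain u v where x: "x = (u,v)" "u \<in> S" "v \<in> S" "u \<noteq> v" "f (min u v, max u v) = 0"
      using assms(1) by auto
    show "x \<in> A0 \<union> (\<lambda>(u,v). (v,u)) ` A0"
    proof (cases "u < v")
      case True thus ?thesis using x by (auto simp: A0_def pr_def min_def max_def)
    next
      case False hence "v < u" using x by simp
      thus ?thesis using x by (auto simp: A0_def pr_def min_def max_def image_iff)
    qed
  next
    fix x assume "x \<in> A0 \<union> (\<lambda>(u,v). (v,u)) ` A0"
    thus "x \<in> {(u,v). u \<in> S \<and> v \<in> S \<and> E u v}"
      using assms(1) by (auto simp: A0_def pr_def min_def max_def)
  qed
  have disj: "A0 \<inter> (\<lambda>(u,v). (v,u)) ` A0 = {}" by (auto simp: A0_def pr_def)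
  have inj: "inj_on (\<lambda>(u,v). (v,u)) A0" by (auto simp: inj_on_def)
  have "ecount E S = card A0 + card ((\<lambda>(u,v). (v,u)) ` A0)"
    unfolding ecount_def eq using finA disj by (simp add: card_Un_disjoint)
  also have "\<dots> = 2 * card A0" using card_image[OF inj] by simp
  finally show ?thesis unfolding A0_def .
qed

lemma graph_from_f:
  fixes n a s t k :: nat and f :: "nat \<times> nat \<Rightarrow> nat"
  assumes g1: "\<forall>T. T \<subseteq> {0..<n} \<and> card T = a \<longrightarrow> (\<exists>x\<in>pr T. f x = 0)"
  and g2: "\<forall>S A. S \<subseteq> {0..<n} \<and> card S = s \<and> A \<subseteq> pr S \<and> card A = k \<longrightarrow> (\<exists>x\<in>A. f x \<noteq> 0)"
  and kt: "2 * t * (k - 1) \<le> s * (s - t)" and t1: "1 \<le> t" and ts: "2 * t \<le> s" and k1: "1 \<le> k"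
  and E: "E = (\<lambda>u v. u \<noteq> v \<and> f (min u v, max u v) = 0)"
  shows "simple_graph n E \<and> alpha n E < a \<and>
     (\<forall>S. S \<subseteq> {0..<n} \<and> card S = s \<longrightarrow> (\<exists>T. T \<subseteq> S \<and> card T = t \<and> independent_set n E T))"
proof (intro conjI allI impI)
  show "simple_graph n E" unfolding simple_graph_def E by (auto simp: min_def max_def)
  have indlt: "card S < a" if "independent_set n E S" for S
  proof (rule ccontr)
    assume "\<not> card S < a"
    have finS: "finite S" using that unfolding independent_set_def by (auto intro: finite_subset)
    have "a \<le> card S" using \<open>\<not> card S < a\<close> by simp
    then obtain T where T: "T \<subseteq> S" "card T = a" by (metis obtain_subset_with_card_n)
    have "T \<subseteq> {0..<n}" using T that unfolding independent_set_def by auto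
    then obtain x where "x \<in> pr T" "f x = 0" using g1 T by auto
    then obtain u v where "u \<in> S" "v \<in> S" "u < v" "f (u,v) = 0" using T unfolding pr_def by auto
    hence "E u v" unfolding E by (auto simp: min_def max_def)
    thus False using that \<open>u \<in> S\<close> \<open>v \<in> S\<close> unfolding independent_set_def by auto
  qed
  have fin: "finite {card S | S. independent_set n E S}"
  proof (rule finite_subset[of _ "{0..n}"])
    show "{card S | S. independent_set n E S} \<subseteq> {0..n}"
    proof
      fix x assume "x \<in> {card S | S. independent_set n E S}"
      then obtain S where "x = card S" "S \<subseteq> {0..<n}" by (auto simp: independent_set_def)
      hence "x \<le> card {0..<n::nat}" using card_mono[of "{0..<n}" S] by simp
      thus "x \<in> {0..n}" by simp
    qed
  qed simp
  have ne: "{card S | S. independent_set n E S} \<noteq> {}"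
    by (auto simp: independent_set_def intro!: exI[of _ "{}"])
  show "alpha n E < a" unfolding alpha_def using fin ne indlt
    by (subst Max_less_iff) auto
next
  fix S assume S: "S \<subseteq> {0..<n} \<and> card S = s"
  have finS: "finite S" using S by (auto intro: finite_subset)
  have symE: "\<And>u v. E u v = E v u" unfolding E by (auto simp: min_def max_def)
  have irrE: "\<And>v. \<not> E v v" unfolding E by simp
  define A0 where "A0 = {x \<in> pr S. f x = 0}"
  have A0k: "card A0 < k"
  proof (rule ccontr)
    assume "\<not> card A0 < k"
    hence "k \<le> card A0" by simp
    then obtain A where A: "A \<subseteq> A0" "card A = k" by (metis obtain_subset_with_card_n)
    hence "A \<subseteq> pr S" unfolding A0_def by auto
    then obtain x where "x \<in> A" "f x \<noteq> 0" using g2 S A by blast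
    thus False using A A0_def by auto
  qed
  have ec: "ecount E S = 2 * card A0" unfolding A0_def
    by (rule ecount_eq[OF _ finS]) (simp add: E)
  obtain I where I: "I \<subseteq> S" "\<forall>u\<in>I. \<forall>v\<in>I. \<not> E u v" "(card S)^2 \<le> card I * (ecount E S + card S)"
    using turan[where E=E and R=S, OF symE irrE finS] by blast
  have "t \<le> card I"
  proof (rule ccontr)
    assume "\<not> t \<le> card I"
    hence "card I \<le> t - 1" by simp
    have "ecount E S \<le> 2 * (k - 1)" using ec A0k by simp
    hence "card I * (ecount E S + card S) \<le> card I * (2 * (k - 1) + s)" using S
      by (intro mult_le_mono2) simp
    hence "s^2 \<le> card I * (2 * (k - 1) + s)" using I(3) S by (metis le_trans)
    also have "\<dots> \<le> (t - 1) * (2 * (k - 1) + s)" using \<open>card I \<le> t - 1\<close> by simp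
    also have "\<dots> < t * (2 * (k - 1) + s)" using t1 ts by simp
    also have "\<dots> = 2 * t * (k - 1) + t * s" by (simp add: algebra_simps)
    also have "\<dots> \<le> s * (s - t) + t * s" using kt by simp
    also have "\<dots> = s^2" using ts by (simp add: power2_eq_square diff_mult_distrib2)
    finally show False by simp
  qed
  then obtain T where T: "T \<subseteq> I" "card T = t" using obtain_subset_with_card_n by metis
  show "\<exists>T. T \<subseteq> S \<and> card T = t \<and> independent_set n E T"
    using T I S unfolding independent_set_def by (intro exI[of _ T]) blast
qed

lemma pow_fact_le_exp:
  fixes x :: real assumes "0 \<le> x" shows "x^n / fact n \<le> exp x"
proof -
  have "(\<Sum>m\<in>{n}. x^m /\<^sub>R fact m) \<le> (\<Sum>m. x^m /\<^sub>R fact m)"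
    using assms summable_exp_generic[of x]
    by (intro sum_le_suminf) auto
  thus ?thesis by (simp add: exp_def divide_inverse ac_simps)
qed

lemma binom_bound:
  assumes "1 \<le> k" shows "real (n choose k) \<le> (exp 1 * real n / real k) ^ k"
proof -
  have kp: "real k > 0" using assms by simp
  have h1: "real (n choose k) * fact k \<le> real n ^ k"
    using binomial_fact_pow[of n k] by (metis of_nat_fact of_nat_le_iff of_nat_mult of_nat_power)
  have h2: "real k ^ k / fact k \<le> exp (real k)" by (rule pow_fact_le_exp) simp
  have ek: "exp (real k) = exp 1 ^ k" by (simp add: exp_of_nat_mult[symmetric])
  have fp: "(fact k :: real) > 0" by simp
  have "real (n choose k) * real k ^ k \<le> real (n choose k) * (exp 1 ^ k * fact k)"
    using h2 ek fp by (intro mult_left_mono) (auto simp: divide_le_eq)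
  also have "\<dots> = exp 1 ^ k * (real (n choose k) * fact k)" by simp
  also have "\<dots> \<le> exp 1 ^ k * real n ^ k" using h1 by (intro mult_left_mono) auto
  finally have "real (n choose k) * real k ^ k \<le> (exp 1 * real n) ^ k" by (simp add: power_mult_distrib)
  thus ?thesis using kp by (simp add: power_divide pos_le_divide_eq)
qed

lemma real_choose_two: "real (a choose 2) = real a * (real a - 1) / 2"
proof (cases a)
  case 0 thus ?thesis by simp
next
  case (Suc b)
  have "even (a * (a - 1))" by auto
  hence "2 * (a choose 2) = a * (a - 1)" by (simp add: choose_two)
  hence "2 * real (a choose 2) = real a * (real a - 1)" using Suc
    by (metis of_nat_1 of_nat_diff of_nat_mult of_nat_numeral One_nat_def Suc_le_eq zero_less_Suc)
  thus ?thesis by simp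
qed

lemma e_gt_2: "exp (1::real) > 2"
proof -
  have h: "exp (1/2::real) \<ge> 1 + 1/2" by (rule exp_ge_add_one_self)
  have "exp (1::real) = exp (1/2) * exp (1/2)" by (simp flip: exp_add)
  also have "\<dots> \<ge> (1 + 1/2) * (1 + 1/2)" using h by (intro mult_mono) auto
  finally show ?thesis by simp
qed

lemma exp2: "exp (2::real) = exp 1 * exp 1"
  by (simp flip: exp_add)

lemma bound2:
  fixes n s t k :: nat and q :: real
  assumes t1: "1 \<le> t" and ts: "2*t \<le> s" and sn: "real s \<le> real n / 2"
  and q: "2 * exp 2 * real t * (exp 1 * real n / real s) powr (2 * real t / (real s - real t)) \<le> q"
  and k: "real s * (real s - real t) \<le> 2 * real k * real t" and k1: "1 \<le> k"
  shows "real (n choose s) * real ((s choose 2) choose k) * (1/q)^k < 1/2"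
proof -
  define \<beta> where "\<beta> = 2 * real t / (real s - real t)"
  define B where "B = exp 1 * real n / real s"
  define R where "R = B powr \<beta>"
  have sp: "real s > 0" and tp: "real t > 0" and st: "real s - real t > 0" using t1 ts by auto
  have st2: "real s \<le> 2 * (real s - real t)" using ts by simp
  have B1: "B \<ge> 1"
  proof -
    have "real n / real s \<ge> 2" using sn sp by (simp add: field_simps)
    hence "exp 1 * (real n / real s) \<ge> 1 * 1" using exp_ge_add_one_self[of 1]
      by (intro mult_mono) auto
    thus ?thesis unfolding B_def by simp
  qed
  have R1: "R \<ge> 1" unfolding R_def using B1 \<beta>_def st tp by (simp add: ge_one_powr_ge_zero)
  have qR: "2 * exp 2 * real t * R \<le> q" using q unfolding R_def B_def \<beta>_def .
  have "0 < 2 * exp 2 * real t * R" using R1 tp by simp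
  hence qp: "q > 0" using qR by linarith
  have c1: "real (n choose s) \<le> B ^ s" unfolding B_def using binom_bound[of s n] ts t1 by simp
  define m where "m = real (s choose 2)"
  have m: "m \<le> real s ^ 2 / 2" unfolding m_def real_choose_two by (simp add: power2_eq_square field_simps)
  have kp: "real k > 0" using k1 by simp
  have m2: "m \<le> 2 * real k * real t"
  proof -
    have "real s * real s \<le> 2 * (real s * (real s - real t))" using st2 sp by simp
    thus ?thesis using m k by (simp add: power2_eq_square)
  qed
  have c2: "real ((s choose 2) choose k) \<le> (exp 1 * m / real k) ^ k"
    unfolding m_def using binom_bound[OF k1] by simp
  have "exp 1 * m / real k \<le> exp 1 * (2 * real t)" using m2 kp by (simp add: field_simps)
  hence "(exp 1 * m / real k) ^ k \<le> (2 * exp 1 * real t) ^ k"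
    using kp m_def by (intro power_mono) (auto simp: mult.commute mult.left_commute)
  hence "real ((s choose 2) choose k) \<le> (2 * exp 1 * real t) ^ k" using c2 by linarith
  hence "real ((s choose 2) choose k) * (1/q)^k \<le> (2 * exp 1 * real t) ^ k * (1/q)^k"
    using qp by (intro mult_right_mono) auto
  hence c3: "real ((s choose 2) choose k) * (1/q)^k \<le> (2 * exp 1 * real t / q) ^ k"
    by (simp add: power_mult_distrib[symmetric])
  have "2 * exp 1 * real t / q \<le> 2 * exp 1 * real t / (2 * exp 2 * real t * R)"
    using qR R1 tp qp by (intro divide_left_mono) auto
  also have "\<dots> = 1 / (exp 1 * R)" using tp R1 unfolding exp2
    by (simp add: field_simps)
  finally have c4: "(2 * exp 1 * real t / q) ^ k \<le> (1 / (exp 1 * R)) ^ k"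
    using qp tp by (intro power_mono) auto
  have Rk: "R ^ k \<ge> B ^ s"
  proof -
    have "R ^ k = B powr (\<beta> * real k)" unfolding R_def using B1
      by (simp add: powr_realpow[symmetric] powr_powr)
    moreover have "\<beta> * real k \<ge> real s"
      unfolding \<beta>_def using k st by (simp add: field_simps)
    hence "B powr (\<beta> * real k) \<ge> B powr real s" using B1 by (intro powr_mono) auto
    moreover have "B powr real s = B ^ s" using B1 by (simp add: powr_realpow)
    ultimately show ?thesis by simp
  qed
  have "real (n choose s) * real ((s choose 2) choose k) * (1/q)^k
      \<le> B ^ s * (1 / (exp 1 * R)) ^ k"
  proof -
    have "real (n choose s) * (real ((s choose 2) choose k) * (1/q)^k)
        \<le> B ^ s * (1 / (exp 1 * R)) ^ k"
      using c1 c3 c4 qp B1 by (intro mult_mono) auto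
    thus ?thesis by (simp add: mult.assoc)
  qed
  also have "\<dots> = (B ^ s / R ^ k) * (1 / exp 1) ^ k" by (simp add: power_mult_distrib field_simps)
  also have "\<dots> \<le> 1 * (1 / exp 1) ^ 1"
  proof (intro mult_mono)
    show "B ^ s / R ^ k \<le> (1::real)" using Rk R1 by simp
    have "(1 / exp (1::real)) \<le> 1" by simp
    show "(1 / exp (1::real)) ^ k \<le> (1 / exp 1) ^ 1" by (rule power_decreasing[OF k1]) (use \<open>1 / exp 1 \<le> 1\<close> in auto)
  qed auto
  also have "\<dots> < 1/2"
  proof -
    have "exp (1::real) > 2" by (rule e_gt_2)
    thus ?thesis by (simp add: field_simps)
  qed
  finally show ?thesis .
qed

lemma bound1:
  fixes n a t :: nat and q :: real
  assumes t1: "1 \<le> t" and tn: "4 * real t \<le> real n" and q1: "1 \<le> q" and at: "t \<le> a"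
  and aq: "6 * q * ln (real n / real t) \<le> real a - 1"
  shows "real (n choose a) * (1 - 1/q)^(a choose 2) < 1/2"
proof -
  define L where "L = ln (real n / real t)"
  define x where "x = real n / real t"
  have tp: "real t > 0" using t1 by simp
  have x4: "x \<ge> 4" unfolding x_def using tn tp by (simp add: field_simps)
  have xL: "exp L = x" unfolding L_def x_def using x4 x_def by simp
  have L1: "L \<ge> 1"
  proof -
    have "exp 1 \<le> x" using exp_le x4 by linarith
    thus ?thesis using xL by (metis exp_le_cancel_iff)
  qed
  have a1: "a \<ge> 1" using at t1 by simp
  have ap: "real a > 0" using a1 by simp
  have "real (n choose a) \<le> (exp 1 * real n / real a) ^ a" by (rule binom_bound[OF a1])
  also have "\<dots> \<le> (exp 1 * real n / real t) ^ a"
    using at tp by (intro power_mono divide_left_mono) auto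
  also have "\<dots> = exp (real a * (1 + L))"
  proof -
    have "exp (real a * (1 + L)) = exp (1 + L) ^ a" by (rule exp_of_nat_mult)
    also have "exp (1 + L) = exp 1 * real n / real t" unfolding exp_add xL x_def by simp
    finally show ?thesis by simp
  qed
  finally have c1: "real (n choose a) \<le> exp (real a * (1 + L))" .
  define c where "c = real (a choose 2)"
  have "(1 - 1/q)^(a choose 2) \<le> exp (- 1/q) ^ (a choose 2)"
  proof (rule power_mono)
    show "1 - 1/q \<le> exp (- 1/q)" using exp_ge_add_one_self[of "-1/q"] by simp
    show "0 \<le> 1 - 1/q" using q1 by simp
  qed
  also have "\<dots> = exp (- c / q)" unfolding c_def exp_of_nat_mult[symmetric] by simp
  also have "\<dots> \<le> exp (- (3 * real a * L))"
  proof -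
    have "c = real a * (real a - 1) / 2" unfolding c_def by (rule real_choose_two)
    moreover have "real a * (6 * q * L) \<le> real a * (real a - 1)"
      using aq L_def ap by (intro mult_left_mono) auto
    ultimately have "3 * real a * L * q \<le> c" by (simp add: field_simps)
    hence "3 * real a * L \<le> c / q" using q1 by (simp add: field_simps)
    thus ?thesis by simp
  qed
  finally have c2: "(1 - 1/q)^(a choose 2) \<le> exp (- (3 * real a * L))" .
  have "real (n choose a) * (1 - 1/q)^(a choose 2) \<le> exp (real a * (1 + L)) * exp (- (3 * real a * L))"
    using c1 c2 q1 by (intro mult_mono) auto
  also have "\<dots> = exp (real a * (1 - 2 * L))"
  proof -
    have "real a * (1 + L) + (- (3 * real a * L)) = real a * (1 - 2 * L)" by (simp add: algebra_simps)
    thus ?thesis by (metis exp_add)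
  qed
  also have "\<dots> \<le> exp (1 - 2 * L)"
  proof -
    have "real a * (1 - 2 * L) \<le> 1 * (1 - 2 * L)" using a1 L1
      by (intro mult_right_mono_neg) auto
    thus ?thesis by simp
  qed
  also have "\<dots> = exp 1 / (x * x)"
  proof -
    have e2: "exp (2 * L) = x * x" using xL by (metis exp_add mult_2)
    show ?thesis using exp_diff[of 1 "2*L"] e2 by simp
  qed
  also have "\<dots> \<le> 3 / 16"
  proof -
    have "4 * 4 \<le> x * x" by (rule mult_mono) (use x4 in auto)
    hence "16 \<le> x * x" by simp
    have "exp 1 / (x * x) \<le> 3 / (x * x)" by (rule divide_right_mono) (use exp_le in auto)
    also have "\<dots> \<le> 3 / 16" using \<open>16 \<le> x * x\<close> by (intro divide_left_mono) auto
    finally show ?thesis .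
  qed
  finally show ?thesis by simp
qed

theorem theorem2p3:
  shows "\<exists>C::real. C > 0 \<and> (\<exists>t0::nat. \<exists>N::nat. \<forall>n\<ge>N. \<forall>t s::nat.
     t \<ge> t0 \<longrightarrow> 2 * t \<le> s \<longrightarrow> real s \<le> real n / 2 \<longrightarrow>
     (\<exists>E. simple_graph n E \<and>
        real (alpha n E) \<le> C * real t * (real n / real s) powr (2 * real t / (real s - real t))
                             * ln (real n / real t) \<and>
        (\<forall>S. S \<subseteq> {0..<n} \<and> card S = s \<longrightarrow>
             (\<exists>T. T \<subseteq> S \<and> card T = t \<and> independent_set n E T))))"
proof (intro exI[of _ "24 * exp 4 + 1"] conjI exI[of _ "1::nat"] exI[of _ "0::nat"] allI impI)
  show "(0::real) < 24 * exp 4 + 1" by (simp add: add_pos_pos)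
  fix n t s :: nat
  assume t1: "1 \<le> t" and ts: "2 * t \<le> s" and sn: "real s \<le> real n / 2"
  define \<beta> where "\<beta> = 2 * real t / (real s - real t)"
  define Q where "Q = (real n / real s) powr \<beta>"
  define L where "L = ln (real n / real t)"
  define q0 where "q0 = 2 * exp 2 * real t * (exp 1 * real n / real s) powr \<beta>"
  define qn where "qn = nat \<lceil>q0\<rceil>"
  define a where "a = nat \<lceil>24 * exp 4 * real t * Q * L\<rceil> + 1"
  define k where "k = s * (s - t) div (2 * t) + 1"
  have tp: "real t > 0" and sp: "real s > 0" and st: "real s - real t > 0" using t1 ts by auto
  have st2: "real s - real t \<ge> real t" using ts by simp
  have b0: "\<beta> \<ge> 0" and b2: "\<beta> \<le> 2" unfolding \<beta>_def using st st2 tp by (auto simp: field_simps)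
  have ns2: "real n / real s \<ge> 2" using sn sp by (simp add: field_simps)
  have Q1: "Q \<ge> 1" unfolding Q_def using ns2 b0 by (simp add: ge_one_powr_ge_zero)
  have tn: "4 * real t \<le> real n" using ts sn by simp
  have L1: "L \<ge> 1"
  proof -
    have "real n / real t \<ge> 4" using tn tp by (simp add: field_simps)
    hence "exp 1 \<le> real n / real t" using exp_le by linarith
    moreover have "real n / real t > 0" using tn tp by simp
    ultimately have "ln (exp 1) \<le> ln (real n / real t)" by (subst ln_le_cancel_iff) auto
    thus ?thesis unfolding L_def by simp
  qed
  have eQ: "(exp 1 * real n / real s) powr \<beta> = exp \<beta> * Q"
  proof -
    have "exp 1 * real n / real s = exp 1 * (real n / real s)" by simp
    hence "(exp 1 * real n / real s) powr \<beta> = exp 1 powr \<beta> * (real n / real s) powr \<beta>"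
      by (simp only: powr_mult)
    moreover have "exp 1 powr \<beta> = exp \<beta>" by (simp add: powr_def)
    ultimately show ?thesis unfolding Q_def by simp
  qed
  have q0Q: "q0 = 2 * exp 2 * exp \<beta> * real t * Q" unfolding q0_def eQ by simp
  have q01: "q0 \<ge> 1"
  proof -
    have "exp 2 \<ge> (1::real)" by simp
    moreover have "exp \<beta> \<ge> 1" using b0 by simp
    ultimately have "1 * 1 * 1 * 1 \<le> exp 2 * exp \<beta> * real t * Q" using t1 Q1
      by (intro mult_mono) auto
    thus ?thesis unfolding q0Q by simp
  qed
  have qn1: "qn \<ge> 1" unfolding qn_def using q01 by linarith
  have qge: "real qn \<ge> q0" unfolding qn_def by linarith
  have qle: "real qn \<le> 4 * exp 4 * real t * Q"
  proof -
    have "real qn \<le> q0 + 1" unfolding qn_def using q01 by linarith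
    also have "\<dots> \<le> 2 * q0" using q01 by simp
    also have "\<dots> \<le> 2 * (2 * exp 2 * exp 2 * real t * Q)" unfolding q0Q
      using b2 tp Q1 by (intro mult_left_mono mult_right_mono) auto
    also have "\<dots> = 4 * (exp 2 * exp 2) * real t * Q" by (simp add: algebra_simps)
    also have "exp 2 * exp 2 = (exp 4 :: real)" by (simp flip: exp_add)
    finally show ?thesis by (simp add: algebra_simps)
  qed
  have kk: "real s * (real s - real t) \<le> 2 * real k * real t"
  proof -
    have m0: "0 < 2*t" using t1 by simp
    have "s*(s-t) mod (2*t) < 2*t" using m0 by simp
    moreover have "s*(s-t) div (2*t) * (2*t) + s*(s-t) mod (2*t) = s*(s-t)" by (rule div_mult_mod_eq)
    ultimately have "s * (s - t) < k * (2 * t)" unfolding k_def add_mult_distrib by simp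
    hence "real (s * (s - t)) \<le> real (k * (2 * t))" by linarith
    thus ?thesis using ts by (simp add: of_nat_diff algebra_simps)
  qed
  have k1: "1 \<le> k" unfolding k_def by simp
  have "k - 1 = s*(s-t) div (2*t)" unfolding k_def by simp
  hence kt: "2 * t * (k - 1) \<le> s * (s - t)"
    using times_div_less_eq_dividend[of "2*t" "s*(s-t)"] by simp
  have tQL: "real t * Q * L \<ge> 1"
  proof -
    have "1 * 1 * 1 \<le> real t * Q * L" using t1 Q1 L1 by (intro mult_mono) auto
    thus ?thesis by simp
  qed
  have aR: "real a - 1 \<ge> 24 * exp 4 * real t * Q * L" unfolding a_def by linarith
  have aR2: "real a \<le> 24 * exp 4 * real t * Q * L + 2"
  proof -
    have "0 \<le> 24 * exp 4 * real t * Q * L" using tp Q1 L1 by simp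
    thus ?thesis unfolding a_def by linarith
  qed
  have at: "t \<le> a"
  proof -
    have "exp 4 \<ge> (1::real)" by simp
    hence e4: "1 \<le> 24 * exp (4::real)" by linarith
    have "24 * exp 4 * (real t * Q * L) \<ge> 1 * (real t * Q * L)"
      by (rule mult_right_mono) (use tQL e4 in auto)
    moreover have "real t * 1 * 1 \<le> real t * Q * L" using tp Q1 L1
      by (intro mult_mono) auto
    hence "real t * Q * L \<ge> real t" by simp
    ultimately have "real a \<ge> real t" using aR by (simp add: mult.assoc)
    thus ?thesis by simp
  qed
  have aq: "6 * real qn * ln (real n / real t) \<le> real a - 1"
  proof -
    have "6 * real qn \<le> 6 * (4 * exp 4 * real t * Q)" using qle by linarith
    hence "6 * real qn * L \<le> 6 * (4 * exp 4 * real t * Q) * L"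
      by (rule mult_right_mono) (use L1 in simp)
    thus ?thesis using aR L_def by (simp add: algebra_simps)
  qed
  have B1: "real (n choose a) * (1 - 1 / real qn) ^ (a choose 2) < 1/2"
    by (rule bound1[OF t1 tn _ at aq]) (use qn1 in simp)
  have B2: "real (n choose s) * real ((s choose 2) choose k) * (1 / real qn) ^ k < 1/2"
    by (rule bound2[OF t1 ts sn _ kk k1]) (use qge q0_def \<beta>_def in simp)
  obtain f where fO: "f \<in> Pi\<^sub>E (Pn n) (\<lambda>_. {0..<qn})"
    and g1: "\<forall>T. T \<subseteq> {0..<n} \<and> card T = a \<longrightarrow> (\<exists>x\<in>pr T. f x = 0)"
    and g2: "\<forall>S A. S \<subseteq> {0..<n} \<and> card S = s \<and> A \<subseteq> pr S \<and> card A = k \<longrightarrow> (\<exists>x\<in>A. f x \<noteq> 0)"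
    using exists_good[OF qn1 B1 B2] by blast
  define E where "E = (\<lambda>u v. u \<noteq> v \<and> f (min u v, max u v) = 0)"
  have G: "simple_graph n E \<and> alpha n E < a \<and>
     (\<forall>S. S \<subseteq> {0..<n} \<and> card S = s \<longrightarrow> (\<exists>T. T \<subseteq> S \<and> card T = t \<and> independent_set n E T))"
    by (rule graph_from_f[OF g1 g2 kt t1 ts k1 E_def])
  have "real (alpha n E) \<le> real a - 1" using G by (simp add: of_nat_diff)
  also have "\<dots> \<le> 24 * exp 4 * real t * Q * L + 1" using aR2 by simp
  also have "\<dots> \<le> (24 * exp 4 + 1) * (real t * Q * L)" using tQL by (simp add: algebra_simps)
  finally have "real (alpha n E) \<le> (24 * exp 4 + 1) * real t * (real n / real s) powr (2 * real t / (real s - real t))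
                             * ln (real n / real t)" unfolding Q_def L_def \<beta>_def by (simp add: mult.assoc)
  thus "\<exists>E. simple_graph n E \<and>
        real (alpha n E) \<le> (24 * exp 4 + 1) * real t * (real n / real s) powr (2 * real t / (real s - real t))
                             * ln (real n / real t) \<and>
        (\<forall>S. S \<subseteq> {0..<n} \<and> card S = s \<longrightarrow>
             (\<exists>T. T \<subseteq> S \<and> card T = t \<and> independent_set n E T))"
    using G by blast
qed

end
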